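(* Let $P$ be an Eulerian poset of rank $d>0$. Then (i) $B(P;u,1)=(1-u)^d$ and $B(P;1,v)=0$; (ii) the degree of $B(P;u,v)$ with respect to $v$ is less than $d/2$.
   Context: An Eulerian poset is a finite poset with least element $\hat0$, greatest element $\hat1$, all maximal chains of the same length $d$ (the rank), rank function $\rho$, and Möbius function $\mu(x,y)=(-1)^{\rho(y)-\rho(x)}$ for $x\le y$; intervals $[x,y]$ are Eulerian of rank $\rho(y)-\rho(x)$. For Eulerian $Q$ of rank $e$: $G(Q,t)=H(Q,t)=1$ if $e=0$; for $e>0$, $H(Q,t)=\sum_{\hat0<x\le\hat1}(t-1)^{\rho(x)-1}G([x,\hat1],t)$, $G(Q,t)=\tau_{<e/2}((1-t)H(Q,t))$ with $\tau_{<r}(\sum a_it^i)=\sum_{i<r}a_it^i$. $B(Q;u,v)\in\mathbb{Z}[u,v]$ is defined by $B=1$ if $e=0$ and for $e>0$ recursively by $\sum_{\hat0\le x\le\hat1}B([\hat0,x];u,v)u^{e-\rho(x)}G([x,\hat1],u^{-1}v)=G(Q,uv)$. *)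

theory Defs
  imports "HOL-Computational_Algebra.Polynomial"
begin

definition ivl :: "'a rel \<Rightarrow> 'a \<Rightarrow> 'a \<Rightarrow> 'a set" where
  "ivl r x y = {z. (x, z) \<in> r \<and> (z, y) \<in> r}"

definition is_chain :: "'a rel \<Rightarrow> 'a set \<Rightarrow> bool" where
  "is_chain r C \<longleftrightarrow> (\<forall>x\<in>C. \<forall>y\<in>C. (x, y) \<in> r \<or> (y, x) \<in> r)"

definition maximal_chain :: "'a set \<Rightarrow> 'a rel \<Rightarrow> 'a set \<Rightarrow> bool" where
  "maximal_chain P r C \<longleftrightarrow> C \<subseteq> P \<and> is_chain r C \<and>
     (\<forall>D. C \<subseteq> D \<and> D \<subseteq> P \<and> is_chain r D \<longrightarrow> D = C)"

text \<open>Rank of the interval [x,y]: the length of a longest chain in it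
  (equal to the common length of maximal chains for graded posets).\<close>
definition height :: "'a rel \<Rightarrow> 'a \<Rightarrow> 'a \<Rightarrow> nat" where
  "height r x y = Max {card C - 1 | C. C \<subseteq> ivl r x y \<and> is_chain r C}"

definition rho :: "'a rel \<Rightarrow> 'a \<Rightarrow> 'a \<Rightarrow> nat" where
  "rho r zero x = height r zero x"

text \<open>Moebius function via its defining recursion
  mu(x,x) = 1, mu(x,y) = - sum_{x <= z < y} mu(x,z); the first argument is a fuel bound.\<close>
primrec mob_aux :: "nat \<Rightarrow> 'a rel \<Rightarrow> 'a \<Rightarrow> 'a \<Rightarrow> int" where
  "mob_aux 0 r x y = (if x = y then 1 else 0)"
| "mob_aux (Suc n) r x y =
     (if x = y then 1
      else if (x, y) \<in> r then - (\<Sum>z\<in>ivl r x y - {y}. mob_aux n r x z)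
      else 0)"

definition mobius :: "'a set \<Rightarrow> 'a rel \<Rightarrow> 'a \<Rightarrow> 'a \<Rightarrow> int" where
  "mobius P r x y = mob_aux (card P) r x y"

definition eulerian :: "'a set \<Rightarrow> 'a rel \<Rightarrow> 'a \<Rightarrow> 'a \<Rightarrow> nat \<Rightarrow> bool" where
  "eulerian P r zero one d \<longleftrightarrow>
     finite P \<and> partial_order_on P r \<and> zero \<in> P \<and> one \<in> P \<and>
     (\<forall>x\<in>P. (zero, x) \<in> r \<and> (x, one) \<in> r) \<and>
     (\<forall>C. maximal_chain P r C \<longrightarrow> card C = d + 1) \<and>
     (\<forall>x\<in>P. \<forall>y\<in>P. (x, y) \<in> r \<longrightarrow>
        mobius P r x y = (-1) ^ (rho r zero y - rho r zero x))"

definition tau_half :: "nat \<Rightarrow> int poly \<Rightarrow> int poly" where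
  "tau_half e p = (\<Sum>i\<in>{i. 2 * i < e}. monom (coeff p i) i)"

definition Hsum :: "('a \<Rightarrow> 'a \<Rightarrow> int poly) \<Rightarrow> 'a rel \<Rightarrow> 'a \<Rightarrow> 'a \<Rightarrow> int poly" where
  "Hsum g r x y = (\<Sum>z\<in>ivl r x y - {x}. [:-1, 1:] ^ (height r x z - 1) * g z y)"

primrec G_aux :: "nat \<Rightarrow> 'a rel \<Rightarrow> 'a \<Rightarrow> 'a \<Rightarrow> int poly" where
  "G_aux 0 r x y = 1"
| "G_aux (Suc n) r x y =
     (if height r x y = 0 then 1
      else tau_half (height r x y) ([:1, -1:] * Hsum (G_aux n r) r x y))"

definition G_poly :: "'a set \<Rightarrow> 'a rel \<Rightarrow> 'a \<Rightarrow> 'a \<Rightarrow> int poly" where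
  "G_poly P r x y = G_aux (card P) r x y"

definition H_poly :: "'a set \<Rightarrow> 'a rel \<Rightarrow> 'a \<Rightarrow> 'a \<Rightarrow> int poly" where
  "H_poly P r x y = Hsum (G_poly P r) r x y"

text \<open>Bivariate polynomials in Z[u,v] are represented as int poly poly:
  the OUTER variable is v, the coefficients are polynomials in u.\<close>

text \<open>g(uv) as an element of Z[u,v].\<close>
definition at_uv :: "int poly \<Rightarrow> int poly poly" where
  "at_uv g = (\<Sum>i\<le>degree g. monom (monom (coeff g i) i) i)"

text \<open>u^m g(u^{-1} v) as an element of Z[u,v] (only used when degree g <= m).\<close>
definition homog :: "nat \<Rightarrow> int poly \<Rightarrow> int poly poly" where
  "homog m g = (\<Sum>i\<le>degree g. monom (monom (coeff g i) (m - i)) i)"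

text \<open>B of the interval [x,y], obtained by solving the defining recursion
  sum_{x <= z <= y} B([x,z]) u^(e - rho(z)) G([z,y], v/u) = G([x,y], uv) for the term z = y.\<close>
primrec B_aux :: "nat \<Rightarrow> 'a set \<Rightarrow> 'a rel \<Rightarrow> 'a \<Rightarrow> 'a \<Rightarrow> int poly poly" where
  "B_aux 0 P r x y = 1"
| "B_aux (Suc n) P r x y =
     (if height r x y = 0 then 1
      else at_uv (G_poly P r x y)
        - (\<Sum>z\<in>ivl r x y - {y}.
             B_aux n P r x z * homog (height r x y - height r x z) (G_poly P r z y)))"

definition B_poly :: "'a set \<Rightarrow> 'a rel \<Rightarrow> 'a \<Rightarrow> 'a \<Rightarrow> int poly poly" where
  "B_poly P r x y = B_aux (card P) P r x y"

end

theory Submission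
  imports Defs
begin

definition Rv :: "nat \<Rightarrow> int poly \<Rightarrow> int poly" where
  "Rv m p = (\<Sum>i\<le>m. monom (coeff p (m - i)) i)"

lemma coeff_Rv: "coeff (Rv m p) j = (if j \<le> m then coeff p (m - j) else 0)"
  unfolding Rv_def by (simp add: coeff_sum coeff_monom)

lemma Rv_0 [simp]: "Rv m 0 = 0"
  by (rule poly_eqI) (simp add: coeff_Rv)

lemma Rv_add: "Rv m (p + q) = Rv m p + Rv m q"
  by (rule poly_eqI) (simp add: coeff_Rv)

lemma Rv_minus: "Rv m (- p) = - Rv m p"
  by (rule poly_eqI) (simp add: coeff_Rv)

lemma Rv_sum: "Rv m (\<Sum>z\<in>A. f z) = (\<Sum>z\<in>A. Rv m (f z))"
  by (induction A rule: infinite_finite_induct) (simp_all add: Rv_add)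

lemma Rv_one: "Rv 0 1 = 1"
  by (rule poly_eqI) (simp add: coeff_Rv)

lemma Rv_reflect:
  assumes "degree p \<le> m"
  shows "Rv m p = monom 1 (m - degree p) * reflect_poly p"
proof (rule poly_eqI)
  fix j
  show "coeff (Rv m p) j = coeff (monom 1 (m - degree p) * reflect_poly p) j"
  proof (cases "j < m - degree p")
    case True
    then have "degree p < m - j" by linarith
    then show ?thesis using True by (simp add: coeff_Rv coeff_monom_mult coeff_eq_0)
  next
    case False
    show ?thesis
    proof (cases "j \<le> m")
      case True
      have "degree p - (j - (m - degree p)) = m - j" using False True assms by linarith
      then show ?thesis using False True assms by (simp add: coeff_Rv coeff_monom_mult coeff_reflect_poly)
    next
      case False2: False
      then have "j - (m - degree p) > degree p" using assms by linarith
      then show ?thesis using False False2 by (simp add: coeff_Rv coeff_monom_mult coeff_reflect_poly)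
    qed
  qed
qed

lemma reflect_lin: "reflect_poly [:-1, 1::int:] = [:1, -1:]"
proof -
  have "reflect_poly (pCons (-1) [:1::int:]) = reflect_poly [:1:] + monom (-1) (Suc (degree [:1::int:]))"
    by (rule reflect_poly_pCons') simp
  also have "\<dots> = [:1, -1:]" by (simp add: monom_Suc monom_0)
  finally show ?thesis .
qed

lemma Rv_mult:
  assumes "degree q \<le> b"
  shows "Rv (a + b) ([:-1,1:] ^ a * q) = [:1,-1:] ^ a * Rv b q"
proof (cases "q = 0")
  case True then show ?thesis by simp
next
  case False
  have p0: "[:-1,1::int:] ^ a \<noteq> 0" by simp
  have dp: "degree ([:-1,1::int:] ^ a) = a" by (simp add: degree_power_eq)
  have dpq: "degree ([:-1,1:] ^ a * q) = a + degree q" using degree_mult_eq[OF p0 False] dp by simp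
  have "Rv (a + b) ([:-1,1:] ^ a * q) = monom 1 (a + b - (a + degree q)) * reflect_poly ([:-1,1:] ^ a * q)"
    using Rv_reflect[of "[:-1,1:] ^ a * q" "a+b"] dpq assms by simp
  also have "\<dots> = [:1,-1:] ^ a * (monom 1 (b - degree q) * reflect_poly q)"
    by (simp add: reflect_poly_mult reflect_poly_power reflect_lin ac_simps)
  also have "\<dots> = [:1,-1:] ^ a * Rv b q" using Rv_reflect[OF assms] by simp
  finally show ?thesis .
qed

lemma coeff_tau_half: "coeff (tau_half e p) j = (if 2 * j < e then coeff p j else 0)"
proof -
  have fin: "finite {i. 2 * i < e}" by (rule finite_subset[of _ "{..e}"]) auto
  show ?thesis unfolding tau_half_def coeff_sum using fin by (simp add: coeff_monom)
qed

lemma degree_tau_half: "0 < e \<Longrightarrow> 2 * degree (tau_half e p) < e"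
proof -
  assume e: "0 < e"
  have "degree (tau_half e p) \<le> (e - 1) div 2"
    by (rule degree_le) (auto simp: coeff_tau_half)
  then show ?thesis using e by linarith
qed

lemma poly_at_uv: "poly (at_uv g) 1 = g"
  unfolding at_uv_def by (simp add: poly_sum poly_monom poly_as_sum_of_monoms)

lemma poly_homog:
  assumes "degree g \<le> m"
  shows "poly (homog m g) 1 = Rv m g"
proof -
  have "poly (homog m g) 1 = (\<Sum>i\<le>degree g. monom (coeff g i) (m - i))"
    unfolding homog_def by (simp add: poly_sum poly_monom)
  also have "\<dots> = (\<Sum>i\<le>m. monom (coeff g i) (m - i))"
    by (rule sum.mono_neutral_left) (use assms in \<open>auto simp: coeff_eq_0\<close>)
  also have "\<dots> = (\<Sum>i\<le>m. monom (coeff g (m - i)) i)"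
    using sum.atLeastAtMost_rev[of "\<lambda>i. monom (coeff g (m - i)) i" 0 m]
    by (simp add: atLeast0AtMost)
  finally show ?thesis unfolding Rv_def .
qed

definition phi :: "int poly poly \<Rightarrow> int poly" where
  "phi p = map_poly (\<lambda>c. poly c 1) p"

lemma coeff_phi: "coeff (phi p) n = poly (coeff p n) 1"
  unfolding phi_def by (simp add: coeff_map_poly)

lemma phi_0 [simp]: "phi 0 = 0"
  unfolding phi_def by simp
lemma phi_add: "phi (p + q) = phi p + phi q"
  by (rule poly_eqI) (simp add: coeff_phi)
lemma phi_diff: "phi (p - q) = phi p - phi q"
  by (rule poly_eqI) (simp add: coeff_phi)
lemma phi_mult: "phi (p * q) = phi p * phi q"
  by (rule poly_eqI) (simp add: coeff_phi coeff_mult poly_sum)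
lemma phi_sum: "phi (\<Sum>z\<in>A. f z) = (\<Sum>z\<in>A. phi (f z))"
  by (induction A rule: infinite_finite_induct) (simp_all add: phi_add)
lemma phi_one: "phi 1 = 1"
  unfolding phi_def by simp
lemma phi_monom: "phi (monom (monom c i) j) = monom c j"
  by (rule poly_eqI) (simp add: coeff_phi coeff_monom poly_monom)
lemma phi_at_uv: "phi (at_uv g) = g"
  unfolding at_uv_def by (simp add: phi_sum phi_monom poly_as_sum_of_monoms)
lemma phi_homog: "phi (homog m g) = g"
  unfolding homog_def by (simp add: phi_sum phi_monom poly_as_sum_of_monoms)

lemma degree_at_uv: "degree (at_uv g) \<le> degree g"
  unfolding at_uv_def by (rule degree_sum_le) (auto intro: order_trans[OF degree_monom_le])
lemma degree_homog: "degree (homog m g) \<le> degree g"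
  unfolding homog_def by (rule degree_sum_le) (auto intro: order_trans[OF degree_monom_le])


locale fpos =
  fixes P :: "'a set" and r :: "'a rel"
  assumes finP: "finite P" and po: "partial_order_on P r"
begin

abbreviation h where "h \<equiv> height r"

lemma r_sub: "(x,y) \<in> r \<Longrightarrow> x \<in> P \<and> y \<in> P"
  using po unfolding partial_order_on_def preorder_on_def by blast
lemma r_refl: "x \<in> P \<Longrightarrow> (x,x) \<in> r"
  using po unfolding partial_order_on_def preorder_on_def refl_on_def by blast
lemma r_trans: "(x,y) \<in> r \<Longrightarrow> (y,z) \<in> r \<Longrightarrow> (x,z) \<in> r"
  using po unfolding partial_order_on_def preorder_on_def trans_def by blast
lemma r_antisym: "(x,y) \<in> r \<Longrightarrow> (y,x) \<in> r \<Longrightarrow> x = y"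
  using po unfolding partial_order_on_def antisym_def by blast

lemma ivl_sub: "ivl r x y \<subseteq> P" unfolding ivl_def using r_sub by blast
lemma fin_ivl: "finite (ivl r x y)" using ivl_sub finP finite_subset by blast

lemma ivl_iff: "z \<in> ivl r x y \<longleftrightarrow> (x,z) \<in> r \<and> (z,y) \<in> r"
  unfolding ivl_def by simp

lemma left_in: "(x,y) \<in> r \<Longrightarrow> x \<in> ivl r x y"
  using r_sub[of x y] r_refl[of x] by (simp add: ivl_iff)
lemma right_in: "(x,y) \<in> r \<Longrightarrow> y \<in> ivl r x y"
  using r_sub[of x y] r_refl[of y] by (simp add: ivl_iff)

lemma chain_set_fin: "finite {card C - 1 | C. C \<subseteq> ivl r x y \<and> is_chain r C}"
proof -
  have "finite {C. C \<subseteq> ivl r x y \<and> is_chain r C}"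
    by (rule finite_subset[of _ "Pow (ivl r x y)"]) (auto simp: fin_ivl)
  moreover have "{card C - 1 | C. C \<subseteq> ivl r x y \<and> is_chain r C} = (\<lambda>C. card C - 1) ` {C. C \<subseteq> ivl r x y \<and> is_chain r C}"
    by auto
  ultimately show ?thesis by simp
qed

lemma chain_empty: "is_chain r {}" by (simp add: is_chain_def)

lemma chain_subset: "is_chain r D \<Longrightarrow> A \<subseteq> D \<Longrightarrow> is_chain r A"
  unfolding is_chain_def by blast

lemma height_ge: "C \<subseteq> ivl r x y \<Longrightarrow> is_chain r C \<Longrightarrow> card C - 1 \<le> h x y"
proof -
  assume "C \<subseteq> ivl r x y" "is_chain r C"
  then have "card C - 1 \<in> {card C - 1 | C. C \<subseteq> ivl r x y \<and> is_chain r C}" by auto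
  then show ?thesis unfolding height_def by (rule Max_ge[OF chain_set_fin])
qed

lemma height_ex: "\<exists>C. C \<subseteq> ivl r x y \<and> is_chain r C \<and> card C - 1 = h x y"
proof -
  have "card {} - 1 \<in> {card C - 1 | C. C \<subseteq> ivl r x y \<and> is_chain r C}"
    unfolding mem_Collect_eq by (intro exI[of _ "{}"]) (simp add: chain_empty)
  then have "h x y \<in> {card C - 1 | C. C \<subseteq> ivl r x y \<and> is_chain r C}"
    unfolding height_def by (intro Max_in[OF chain_set_fin]) auto
  then show ?thesis by auto
qed

lemma height_ex2:
  assumes "(x,y) \<in> r"
  shows "\<exists>C. C \<subseteq> ivl r x y \<and> is_chain r C \<and> x \<in> C \<and> y \<in> C \<and> card C = h x y + 1"
proof -
  obtain C where C: "C \<subseteq> ivl r x y" "is_chain r C" "card C - 1 = h x y"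
    using height_ex by blast
  define D where "D = C \<union> {x,y}"
  have xy: "x \<in> ivl r x y" "y \<in> ivl r x y" using assms left_in right_in by auto
  have D1: "D \<subseteq> ivl r x y" using C(1) xy unfolding D_def by simp
  have D2: "is_chain r D" unfolding is_chain_def
  proof (intro ballI)
    fix a b assume a: "a \<in> D" and b: "b \<in> D"
    have "a \<in> ivl r x y" using a D1 by (rule subsetD[rotated])
    then have ia: "(x,a) \<in> r" "(a,y) \<in> r" by (simp_all add: ivl_iff)
    have "b \<in> ivl r x y" using b D1 by (rule subsetD[rotated])
    then have ib: "(x,b) \<in> r" "(b,y) \<in> r" by (simp_all add: ivl_iff)
    show "(a,b) \<in> r \<or> (b,a) \<in> r"
    proof (cases "a \<in> C \<and> b \<in> C")
      case True then show ?thesis using C(2) unfolding is_chain_def by blast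
    next
      case False then have "a = x \<or> a = y \<or> b = x \<or> b = y" using a b unfolding D_def by blast
      then show ?thesis using ia ib by auto
    qed
  qed
  have finD: "finite D" using D1 fin_ivl by (rule finite_subset)
  have "card D - 1 \<le> h x y" using D1 D2 by (rule height_ge)
  moreover have "card C \<le> card D" using finD unfolding D_def by (rule card_mono) blast
  moreover have "card D \<noteq> 0" using finD unfolding D_def by simp
  ultimately have "card D = h x y + 1" using C(3) by linarith
  moreover have "x \<in> D" "y \<in> D" unfolding D_def by simp_all
  ultimately show ?thesis using D1 D2 by blast
qed

lemma height_super:
  assumes "(x,z) \<in> r" "(z,y) \<in> r"
  shows "h x z + h z y \<le> h x y"
proof -
  obtain C1 where C1: "C1 \<subseteq> ivl r x z" "is_chain r C1" "z \<in> C1" "card C1 = h x z + 1"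
    using height_ex2[OF assms(1)] by blast
  obtain C2 where C2: "C2 \<subseteq> ivl r z y" "is_chain r C2" "z \<in> C2" "card C2 = h z y + 1"
    using height_ex2[OF assms(2)] by blast
  have sub: "C1 \<union> C2 \<subseteq> ivl r x y"
  proof
    fix w assume "w \<in> C1 \<union> C2"
    then show "w \<in> ivl r x y"
    proof
      assume "w \<in> C1" then have "(x,w) \<in> r" "(w,z) \<in> r" using C1(1) ivl_iff by blast+
      then show ?thesis using assms r_trans ivl_iff by blast
    next
      assume "w \<in> C2" then have "(z,w) \<in> r" "(w,y) \<in> r" using C2(1) ivl_iff by blast+
      then show ?thesis using assms r_trans ivl_iff by blast
    qed
  qed
  have cross: "(a,b) \<in> r" if "a \<in> C1" "b \<in> C2" for a b
  proof -
    have "(a,z) \<in> r" "(z,b) \<in> r" using that C1(1) C2(1) ivl_iff by blast+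
    then show ?thesis by (rule r_trans)
  qed
  have ch: "is_chain r (C1 \<union> C2)" unfolding is_chain_def
  proof (intro ballI)
    fix a b assume a: "a \<in> C1 \<union> C2" and b: "b \<in> C1 \<union> C2"
    show "(a,b) \<in> r \<or> (b,a) \<in> r"
    proof (cases "a \<in> C1")
      case aC1: True
      show ?thesis
      proof (cases "b \<in> C1")
        case True then show ?thesis using aC1 C1(2) unfolding is_chain_def by blast
      next
        case False then have "b \<in> C2" using b by blast
        then show ?thesis using cross aC1 by blast
      qed
    next
      case False then have aC2: "a \<in> C2" using a by blast
      show ?thesis
      proof (cases "b \<in> C2")
        case True then show ?thesis using aC2 C2(2) unfolding is_chain_def by blast
      next
        case False then have "b \<in> C1" using b by blast
        then show ?thesis using cross aC2 by blast
      qed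
    qed
  qed
  have int: "C1 \<inter> C2 = {z}"
  proof
    show "C1 \<inter> C2 \<subseteq> {z}"
    proof
      fix w assume w: "w \<in> C1 \<inter> C2"
      have "(w,z) \<in> r" "(z,w) \<in> r" using w C1(1) C2(1) ivl_iff by blast+
      then show "w \<in> {z}" using r_antisym by blast
    qed
  qed (use C1(3) C2(3) in blast)
  have f1: "finite C1" "finite C2" using C1(1) C2(1) fin_ivl finite_subset by blast+
  have "card (C1 \<union> C2) = card C1 + card C2 - 1" using card_Un_Int[OF f1] int by simp
  then show ?thesis using height_ge[OF sub ch] C1(4) C2(4) by simp
qed

lemma h_pos: assumes "(x,y) \<in> r" "x \<noteq> y" shows "1 \<le> h x y"
proof -
  have "{x,y} \<subseteq> ivl r x y" using assms left_in right_in by auto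
  moreover have "is_chain r {x,y}" using assms r_sub r_refl unfolding is_chain_def by auto
  ultimately have "card {x,y} - 1 \<le> h x y" by (rule height_ge)
  then show ?thesis using assms by simp
qed

lemma h_refl: "h x x = 0"
proof -
  obtain C where C: "C \<subseteq> ivl r x x" "card C - 1 = h x x" using height_ex by blast
  have "ivl r x x \<subseteq> {x}" using r_antisym ivl_iff by blast
  then have "card C \<le> 1" using C(1) card_mono[of "{x}" C] by auto
  then show ?thesis using C by simp
qed

lemma h_zero_eq: "(x,y) \<in> r \<Longrightarrow> h x y = 0 \<Longrightarrow> x = y"
  using h_pos by fastforce

lemma h_lt_left: "(x,z) \<in> r \<Longrightarrow> (z,y) \<in> r \<Longrightarrow> z \<noteq> x \<Longrightarrow> h z y < h x y"
  using height_super h_pos by fastforce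

lemma h_lt_right: "(x,z) \<in> r \<Longrightarrow> (z,y) \<in> r \<Longrightarrow> z \<noteq> y \<Longrightarrow> h x z < h x y"
  using height_super h_pos by fastforce

lemma h_bound: "h x y \<le> card P - 1"
proof -
  obtain C where C: "C \<subseteq> ivl r x y" "card C - 1 = h x y" using height_ex by blast
  have "card C \<le> card P" using C(1) ivl_sub finP card_mono by (metis order_trans)
  then show ?thesis using C by simp
qed

lemma ivl_refl: "x \<in> P \<Longrightarrow> ivl r x x = {x}"
  using r_antisym r_refl ivl_iff by blast

end

context fpos
begin

lemma ivl_rel: "z \<in> ivl r x y \<Longrightarrow> (x,z) \<in> r \<and> (z,y) \<in> r"
  by (simp add: ivl_iff)

lemma G_fuel_Suc: "(x,y) \<in> r \<Longrightarrow> h x y \<le> n \<Longrightarrow> G_aux n r x y = G_aux (Suc n) r x y"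
proof (induction n arbitrary: x)
  case 0 then show ?case by simp
next
  case (Suc n)
  show ?case
  proof (cases "h x y = 0")
    case True then show ?thesis by simp
  next
    case False
    have "Hsum (G_aux n r) r x y = Hsum (G_aux (Suc n) r) r x y"
      unfolding Hsum_def
    proof (rule sum.cong[OF refl])
      fix z assume z: "z \<in> ivl r x y - {x}"
      then have zr: "(x,z) \<in> r" "(z,y) \<in> r" "z \<noteq> x" using ivl_rel by auto
      have "h z y < h x y" using zr by (rule h_lt_left)
      then have "G_aux n r z y = G_aux (Suc n) r z y" using Suc.IH[OF zr(2)] Suc.prems by simp
      then show "[:-1, 1:] ^ (h x z - 1) * G_aux n r z y = [:-1, 1:] ^ (h x z - 1) * G_aux (Suc n) r z y"
        by simp
    qed
    then show ?thesis using False by simp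
  qed
qed

lemma G_fuel:
  assumes "(x,y) \<in> r" "h x y \<le> n" "n \<le> m"
  shows "G_aux n r x y = G_aux m r x y"
  using assms(3)
proof (induction m rule: dec_induct)
  case base then show ?case by simp
next
  case (step k) then show ?case using G_fuel_Suc[OF assms(1), of k] assms(2) by simp
qed

lemma cardP_pos: "(x,y) \<in> r \<Longrightarrow> card P = Suc (card P - 1)"
proof -
  assume "(x,y) \<in> r"
  then have "x \<in> P" using r_sub by blast
  then have "card P \<noteq> 0" using finP by auto
  then show ?thesis by simp
qed

lemma G_unfold:
  assumes "(x,y) \<in> r"
  shows "G_poly P r x y = (if h x y = 0 then 1
     else tau_half (h x y) ([:1, -1:] * Hsum (G_poly P r) r x y))"
proof -
  define k where "k = card P - 1"
  have cP: "card P = Suc k" using cardP_pos[OF assms] unfolding k_def .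
  have "Hsum (G_aux k r) r x y = Hsum (G_poly P r) r x y"
    unfolding Hsum_def G_poly_def
  proof (rule sum.cong[OF refl])
    fix z assume z: "z \<in> ivl r x y - {x}"
    then have zr: "(z,y) \<in> r" using ivl_rel by auto
    have "G_aux k r z y = G_aux (card P) r z y"
      using G_fuel[OF zr, of k "card P"] h_bound[of z y] cP unfolding k_def by simp
    then show "[:-1, 1:] ^ (h x z - 1) * G_aux k r z y = [:-1, 1:] ^ (h x z - 1) * G_aux (card P) r z y"
      by simp
  qed
  then show ?thesis unfolding G_poly_def cP by simp
qed

lemma B_fuel_Suc: "(x,y) \<in> r \<Longrightarrow> h x y \<le> n \<Longrightarrow> B_aux n P r x y = B_aux (Suc n) P r x y"
proof (induction n arbitrary: y)
  case 0 then show ?case by simp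
next
  case (Suc n)
  show ?case
  proof (cases "h x y = 0")
    case True then show ?thesis by simp
  next
    case False
    have "(\<Sum>z\<in>ivl r x y - {y}. B_aux n P r x z * homog (h x y - h x z) (G_poly P r z y))
        = (\<Sum>z\<in>ivl r x y - {y}. B_aux (Suc n) P r x z * homog (h x y - h x z) (G_poly P r z y))"
    proof (rule sum.cong[OF refl])
      fix z assume z: "z \<in> ivl r x y - {y}"
      then have zr: "(x,z) \<in> r" "(z,y) \<in> r" "z \<noteq> y" using ivl_rel by auto
      have "h x z < h x y" using zr by (rule h_lt_right)
      then have "B_aux n P r x z = B_aux (Suc n) P r x z" using Suc.IH[OF zr(1)] Suc.prems by simp
      then show "B_aux n P r x z * homog (h x y - h x z) (G_poly P r z y)
          = B_aux (Suc n) P r x z * homog (h x y - h x z) (G_poly P r z y)"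
        by simp
    qed
    then show ?thesis using False by simp
  qed
qed

lemma B_fuel:
  assumes "(x,y) \<in> r" "h x y \<le> n" "n \<le> m"
  shows "B_aux n P r x y = B_aux m P r x y"
  using assms(3)
proof (induction m rule: dec_induct)
  case base then show ?case by simp
next
  case (step k) then show ?case using B_fuel_Suc[OF assms(1), of k] assms(2) by simp
qed

lemma B_unfold:
  assumes "(x,y) \<in> r"
  shows "B_poly P r x y = (if h x y = 0 then 1
     else at_uv (G_poly P r x y)
        - (\<Sum>z\<in>ivl r x y - {y}. B_poly P r x z * homog (h x y - h x z) (G_poly P r z y)))"
proof -
  define k where "k = card P - 1"
  have cP: "card P = Suc k" using cardP_pos[OF assms] unfolding k_def .
  have "(\<Sum>z\<in>ivl r x y - {y}. B_aux k P r x z * homog (h x y - h x z) (G_poly P r z y))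
      = (\<Sum>z\<in>ivl r x y - {y}. B_poly P r x z * homog (h x y - h x z) (G_poly P r z y))"
    unfolding B_poly_def
  proof (rule sum.cong[OF refl])
    fix z assume z: "z \<in> ivl r x y - {y}"
    then have zr: "(x,z) \<in> r" using ivl_rel by auto
    have "B_aux k P r x z = B_aux (card P) P r x z"
      using B_fuel[OF zr, of k "card P"] h_bound[of x z] cP unfolding k_def by simp
    then show "B_aux k P r x z * homog (h x y - h x z) (G_poly P r z y)
        = B_aux (card P) P r x z * homog (h x y - h x z) (G_poly P r z y)"
      by simp
  qed
  then show ?thesis unfolding B_poly_def[of P r x y] cP by simp
qed

lemma mob_fuel_Suc: "(x,y) \<in> r \<Longrightarrow> h x y \<le> n \<Longrightarrow> mob_aux n r x y = mob_aux (Suc n) r x y"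
proof (induction n arbitrary: y)
  case 0 then have "x = y" using h_zero_eq by simp
  then show ?case by simp
next
  case (Suc n)
  show ?case
  proof (cases "x = y")
    case True then show ?thesis by simp
  next
    case False
    have "(\<Sum>z\<in>ivl r x y - {y}. mob_aux n r x z) = (\<Sum>z\<in>ivl r x y - {y}. mob_aux (Suc n) r x z)"
    proof (rule sum.cong[OF refl])
      fix z assume z: "z \<in> ivl r x y - {y}"
      then have zr: "(x,z) \<in> r" "(z,y) \<in> r" "z \<noteq> y" using ivl_rel by auto
      have "h x z < h x y" using zr by (rule h_lt_right)
      then show "mob_aux n r x z = mob_aux (Suc n) r x z" using Suc.IH[OF zr(1)] Suc.prems by simp
    qed
    then show ?thesis using False Suc.prems by simp
  qed
qed

lemma mob_fuel:
  assumes "(x,y) \<in> r" "h x y \<le> n" "n \<le> m"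
  shows "mob_aux n r x y = mob_aux m r x y"
  using assms(3)
proof (induction m rule: dec_induct)
  case base then show ?case by simp
next
  case (step k) then show ?case using mob_fuel_Suc[OF assms(1), of k] assms(2) by simp
qed

lemma mob_unfold:
  assumes "(x,y) \<in> r" "x \<noteq> y"
  shows "mobius P r x y = - (\<Sum>z\<in>ivl r x y - {y}. mobius P r x z)"
proof -
  define k where "k = card P - 1"
  have cP: "card P = Suc k" using cardP_pos[OF assms(1)] unfolding k_def .
  have "(\<Sum>z\<in>ivl r x y - {y}. mob_aux k r x z) = (\<Sum>z\<in>ivl r x y - {y}. mobius P r x z)"
    unfolding mobius_def
  proof (rule sum.cong[OF refl])
    fix z assume z: "z \<in> ivl r x y - {y}"
    then have zr: "(x,z) \<in> r" using ivl_rel by auto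
    show "mob_aux k r x z = mob_aux (card P) r x z"
      using mob_fuel[OF zr, of k "card P"] h_bound[of x z] cP unfolding k_def by simp
  qed
  then show ?thesis unfolding mobius_def[of P r x y] cP using assms by simp
qed

end

locale eul = fpos P r for P :: "'a set" and r +
  fixes zero one :: 'a and d :: nat
  assumes z1: "zero \<in> P" "one \<in> P"
  and bnd: "\<And>x. x \<in> P \<Longrightarrow> (zero,x) \<in> r \<and> (x,one) \<in> r"
  and mc: "\<And>C. maximal_chain P r C \<Longrightarrow> card C = d + 1"
  and mob: "\<And>x y. x \<in> P \<Longrightarrow> y \<in> P \<Longrightarrow> (x,y) \<in> r \<Longrightarrow>
        mobius P r x y = (-1) ^ (rho r zero y - rho r zero x)"
begin

lemma ext_max:
  assumes "C \<subseteq> P" "is_chain r C"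
  shows "\<exists>D. maximal_chain P r D \<and> C \<subseteq> D"
proof -
  define S where "S = {D. C \<subseteq> D \<and> D \<subseteq> P \<and> is_chain r D}"
  have finS: "finite S" unfolding S_def
    by (rule finite_subset[of _ "Pow P"]) (auto simp: finP)
  have CS: "C \<in> S" using assms unfolding S_def by simp
  define m where "m = Max (card ` S)"
  have "m \<in> card ` S" unfolding m_def using finS CS by (intro Max_in) auto
  then obtain D where D: "D \<in> S" "card D = m" by blast
  have Dmax: "card D' \<le> card D" if "D' \<in> S" for D'
    using D(2) finS that unfolding m_def by (simp add: Max_ge)
  have DS: "C \<subseteq> D" "D \<subseteq> P" "is_chain r D" using D(1) unfolding S_def by auto
  have "maximal_chain P r D" unfolding maximal_chain_def
  proof (intro conjI allI impI)
    fix D' assume D': "D \<subseteq> D' \<and> D' \<subseteq> P \<and> is_chain r D'"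
    then have "D' \<in> S" using DS unfolding S_def by auto
    then have "card D' \<le> card D" by (rule Dmax)
    moreover have "finite D'" using D' finP finite_subset by blast
    ultimately show "D' = D" using D' card_seteq by blast
  qed (use DS in auto)
  then show ?thesis using DS by blast
qed

lemma zero_le: "x \<in> P \<Longrightarrow> (zero,x) \<in> r" using bnd by blast
lemma le_one: "x \<in> P \<Longrightarrow> (x,one) \<in> r" using bnd by blast

lemma h01: "h zero one \<le> d"
proof -
  obtain C where C: "C \<subseteq> ivl r zero one" "is_chain r C" "card C - 1 = h zero one"
    using height_ex by blast
  have "C \<subseteq> P" using C(1) ivl_sub by blast
  then obtain D where D: "maximal_chain P r D" "C \<subseteq> D" using ext_max C(2) by blast
  have "finite D" using D(1) finP finite_subset unfolding maximal_chain_def by blast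
  then have "card C \<le> card D" using D(2) card_mono by blast
  then show ?thesis using mc[OF D(1)] C(3) by simp
qed

lemma triple:
  assumes xz: "(x,z) \<in> r"
  shows "h zero x + h x z + h z one = d"
proof (rule antisym)
  have xP: "x \<in> P" and zP: "z \<in> P" using r_sub xz by auto
  have "h zero x + h x z \<le> h zero z" using height_super zero_le[OF xP] xz by blast
  moreover have "h zero z + h z one \<le> h zero one" using height_super zero_le[OF zP] le_one[OF zP] by blast
  ultimately show "h zero x + h x z + h z one \<le> d" using h01 by linarith
next
  have xP: "x \<in> P" and zP: "z \<in> P" using r_sub xz by auto
  have ch: "is_chain r {x,z}" using xz r_refl[OF xP] r_refl[OF zP] unfolding is_chain_def by auto
  obtain D where D: "maximal_chain P r D" "{x,z} \<subseteq> D" using ext_max[OF _ ch] xP zP by auto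
  have DP: "D \<subseteq> P" and Dch: "is_chain r D" using D(1) unfolding maximal_chain_def by auto
  have finD: "finite D" using DP finP finite_subset by blast
  define A1 where "A1 = D \<inter> ivl r zero x"
  define A2 where "A2 = D \<inter> ivl r x z"
  define A3 where "A3 = D \<inter> ivl r z one"
  have cov: "D \<subseteq> A1 \<union> (A2 - {x}) \<union> (A3 - {z})"
  proof
    fix w assume wD: "w \<in> D"
    then have wP: "w \<in> P" using DP by blast
    have wx: "(w,x) \<in> r \<or> (x,w) \<in> r" using Dch wD D(2) unfolding is_chain_def by blast
    have wz: "(w,z) \<in> r \<or> (z,w) \<in> r" using Dch wD D(2) unfolding is_chain_def by blast
    have 0: "(zero,w) \<in> r" "(w,one) \<in> r" using wP zero_le le_one by auto
    show "w \<in> A1 \<union> (A2 - {x}) \<union> (A3 - {z})"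
    proof (cases "(w,x) \<in> r")
      case True then have "w \<in> A1" unfolding A1_def using wD 0 by (simp add: ivl_iff)
      then show ?thesis by blast
    next
      case nwx: False
      then have xw: "(x,w) \<in> r" "w \<noteq> x" using wx xP r_refl by auto
      show ?thesis
      proof (cases "(w,z) \<in> r")
        case True then have "w \<in> A2 - {x}" unfolding A2_def using wD xw by (simp add: ivl_iff)
        then show ?thesis by blast
      next
        case False
        then have "(z,w) \<in> r" "w \<noteq> z" using wz zP r_refl by auto
        then have "w \<in> A3 - {z}" unfolding A3_def using wD 0 by (simp add: ivl_iff)
        then show ?thesis by blast
      qed
    qed
  qed
  have fA: "finite A1" "finite A2" "finite A3" unfolding A1_def A2_def A3_def using finD by auto
  have c1: "card A1 \<le> h zero x + 1"
  proof -
    have "card A1 - 1 \<le> h zero x" unfolding A1_def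
      by (rule height_ge) (auto intro: chain_subset[OF Dch])
    then show ?thesis by linarith
  qed
  have xA2: "x \<in> A2" unfolding A2_def using D(2) left_in[OF xz] by auto
  have zA3: "z \<in> A3" unfolding A3_def using D(2) left_in[OF le_one[OF zP]] by auto
  have c2: "card (A2 - {x}) \<le> h x z"
  proof -
    have "card A2 - 1 \<le> h x z" unfolding A2_def
      by (rule height_ge) (auto intro: chain_subset[OF Dch])
    then show ?thesis using xA2 fA by simp
  qed
  have c3: "card (A3 - {z}) \<le> h z one"
  proof -
    have "card A3 - 1 \<le> h z one" unfolding A3_def
      by (rule height_ge) (auto intro: chain_subset[OF Dch])
    then show ?thesis using zA3 fA by simp
  qed
  have "card D \<le> card (A1 \<union> (A2 - {x}) \<union> (A3 - {z}))"
    using cov fA by (intro card_mono) auto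
  also have "\<dots> \<le> card (A1 \<union> (A2 - {x})) + card (A3 - {z})" by (rule card_Un_le)
  also have "\<dots> \<le> card A1 + card (A2 - {x}) + card (A3 - {z})" using card_Un_le by simp
  finally have "card D \<le> card A1 + card (A2 - {x}) + card (A3 - {z})" .
  then show "d \<le> h zero x + h x z + h z one" using mc[OF D(1)] c1 c2 c3 by linarith
qed

lemma h_add0: "(x,z) \<in> r \<Longrightarrow> h zero x + h x z = h zero z"
proof -
  assume xz: "(x,z) \<in> r"
  then have zP: "z \<in> P" using r_sub by blast
  have "h zero zero + h zero z + h z one = d" using triple zero_le[OF zP] by blast
  moreover have "h zero x + h x z + h z one = d" using triple xz by blast
  ultimately show ?thesis using h_refl by simp
qed

lemma h_add: "(x,z) \<in> r \<Longrightarrow> (z,y) \<in> r \<Longrightarrow> h x z + h z y = h x y"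
  using h_add0[of x z] h_add0[of z y] h_add0[of x y] r_trans[of x z y] by linarith

lemma mob_eq: "(x,z) \<in> r \<Longrightarrow> mobius P r x z = (-1) ^ (h x z)"
proof -
  assume xz: "(x,z) \<in> r"
  then have "x \<in> P" "z \<in> P" using r_sub by auto
  then have "mobius P r x z = (-1) ^ (h zero z - h zero x)" using mob xz unfolding rho_def by blast
  moreover have "h zero z - h zero x = h x z" using h_add0[OF xz] by linarith
  ultimately show ?thesis by simp
qed

lemma alt_sum:
  assumes "(x,w) \<in> r" "x \<noteq> w"
  shows "(\<Sum>z\<in>ivl r x w. (-1::int) ^ (h x z)) = 0"
proof -
  have wI: "w \<in> ivl r x w" using right_in[OF assms(1)] .
  have "(\<Sum>z\<in>ivl r x w. (-1::int) ^ (h x z)) = (\<Sum>z\<in>ivl r x w. mobius P r x z)"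
    by (rule sum.cong[OF refl]) (simp add: mob_eq ivl_iff)
  also have "\<dots> = mobius P r x w + (\<Sum>z\<in>ivl r x w - {w}. mobius P r x z)"
    using sum.remove[OF fin_ivl wI] by simp
  also have "\<dots> = 0" using mob_unfold[OF assms] by simp
  finally show ?thesis .
qed

lemma kernel:
  assumes "(x,w) \<in> r"
  shows "(\<Sum>z\<in>ivl r x w. [:1,-1:] ^ (h x z) * [:-1,1:] ^ (h z w) :: int poly)
     = (if x = w then 1 else 0)"
proof (cases "x = w")
  case True
  then have "ivl r x w = {x}" using ivl_refl r_sub assms by auto
  then show ?thesis using True h_refl by simp
next
  case False
  have "(\<Sum>z\<in>ivl r x w. [:1,-1:] ^ (h x z) * [:-1,1:] ^ (h z w) :: int poly)
      = (\<Sum>z\<in>ivl r x w. smult ((-1) ^ (h x z)) ([:-1,1:] ^ (h x w)))"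
  proof (rule sum.cong[OF refl])
    fix z assume "z \<in> ivl r x w"
    then have e: "h x z + h z w = h x w" using h_add ivl_iff by blast
    have "[:1,-1:] ^ (h x z) = (smult (-1) [:-1,1::int:]) ^ (h x z)" by simp
    also have "\<dots> = smult ((-1) ^ (h x z)) ([:-1,1::int:] ^ (h x z))" by (rule smult_power)
    finally have "[:1,-1:] ^ (h x z) = smult ((-1) ^ (h x z)) ([:-1,1::int:] ^ (h x z))" .
    then show "[:1,-1:] ^ (h x z) * [:-1,1:] ^ (h z w) = smult ((-1) ^ (h x z)) ([:-1,1::int:] ^ (h x w))"
      using e by (simp add: power_add[symmetric])
  qed
  also have "\<dots> = smult (\<Sum>z\<in>ivl r x w. (-1) ^ (h x z)) ([:-1,1:] ^ (h x w))"
    by (simp add: smult_sum)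
  also have "\<dots> = 0" using alt_sum[OF assms False] by simp
  finally show ?thesis using False by simp
qed

end

context fpos
begin

lemma G_refl: "(x,y) \<in> r \<Longrightarrow> h x y = 0 \<Longrightarrow> G_poly P r x y = 1"
  using G_unfold by simp

lemma G_deg: "(x,y) \<in> r \<Longrightarrow> 0 < h x y \<Longrightarrow> 2 * degree (G_poly P r x y) < h x y"
  using G_unfold degree_tau_half by simp

lemma G_deg': "(x,y) \<in> r \<Longrightarrow> degree (G_poly P r x y) \<le> h x y"
  using G_deg[of x y] G_refl[of x y] by (cases "h x y = 0") auto

lemma B_refl: "x \<in> P \<Longrightarrow> B_poly P r x x = 1"
  using B_unfold[OF r_refl] h_refl by simp

end

context eul
begin

definition Fp where "Fp x y = (\<Sum>z\<in>ivl r x y. [:-1,1:] ^ (h x z) * G_poly P r z y)"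

lemma exch:
  assumes xy: "(x,y) \<in> r"
  shows "(\<Sum>z\<in>ivl r x y. [:1,-1:] ^ (h x z) * Fp z y) = G_poly P r x y"
proof -
  define I where "I = ivl r x y"
  define K where "K z w = [:1,-1:] ^ (h x z) * ([:-1,1:] ^ (h z w) * G_poly P r w y)" for z w
  have finI: "finite I" unfolding I_def by (rule fin_ivl)
  have s1: "ivl r z y = {w \<in> I. (z,w) \<in> r}" if "z \<in> I" for z
  proof (rule set_eqI)
    fix w
    have "(x,z) \<in> r" using that unfolding I_def by (simp add: ivl_iff)
    then show "w \<in> ivl r z y \<longleftrightarrow> w \<in> {w \<in> I. (z,w) \<in> r}"
      using r_trans[of x z w] unfolding I_def by (auto simp: ivl_iff)
  qed
  have s2: "ivl r x w = {z \<in> I. (z,w) \<in> r}" if "w \<in> I" for w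
  proof (rule set_eqI)
    fix z
    have "(w,y) \<in> r" using that unfolding I_def by (simp add: ivl_iff)
    then show "z \<in> ivl r x w \<longleftrightarrow> z \<in> {z \<in> I. (z,w) \<in> r}"
      using r_trans[of z w y] unfolding I_def by (auto simp: ivl_iff)
  qed
  have "(\<Sum>z\<in>I. [:1,-1:] ^ (h x z) * Fp z y) = (\<Sum>z\<in>I. \<Sum>w\<in>ivl r z y. K z w)"
    unfolding Fp_def K_def by (simp add: sum_distrib_left)
  also have "\<dots> = (\<Sum>z\<in>I. \<Sum>w\<in>I. if (z,w) \<in> r then K z w else 0)"
    by (rule sum.cong[OF refl]) (simp add: s1 sum.inter_filter[OF finI])
  also have "\<dots> = (\<Sum>w\<in>I. \<Sum>z\<in>I. if (z,w) \<in> r then K z w else 0)"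
    by (rule sum.swap)
  also have "\<dots> = (\<Sum>w\<in>I. \<Sum>z\<in>ivl r x w. K z w)"
    by (rule sum.cong[OF refl]) (simp add: s2 sum.inter_filter[OF finI])
  also have "\<dots> = (\<Sum>w\<in>I. (\<Sum>z\<in>ivl r x w. [:1,-1:] ^ (h x z) * [:-1,1:] ^ (h z w)) * G_poly P r w y)"
    unfolding K_def by (simp add: sum_distrib_right mult.assoc)
  also have "\<dots> = (\<Sum>w\<in>I. if x = w then G_poly P r w y else 0)"
    by (rule sum.cong[OF refl]) (auto simp: kernel I_def ivl_iff)
  also have "\<dots> = G_poly P r x y"
    using left_in[OF xy] finI unfolding I_def by (simp add: sum.delta)
  finally show ?thesis unfolding I_def .
qed

lemma Fp_refl: "x \<in> P \<Longrightarrow> Fp x x = 1"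
  unfolding Fp_def using ivl_refl h_refl G_refl r_refl by simp

lemma M_aux: "(x,y) \<in> r \<Longrightarrow> h x y = n \<Longrightarrow> Fp x y = Rv n (G_poly P r x y)"
proof (induction n arbitrary: x rule: less_induct)
  case (less n x)
  note xy = less.prems(1)
  show ?case
  proof (cases "n = 0")
    case True
    then have "x = y" using h_zero_eq xy less.prems(2) by simp
    then show ?thesis using True Fp_refl G_refl xy r_sub h_refl Rv_one by simp
  next
    case False
    define e where "e = h x y"
    have en: "e = n" using less.prems(2) unfolding e_def by simp
    have e0: "0 < e" using False en by simp
    have xny: "x \<noteq> y" using e0 h_refl unfolding e_def by auto
    define I where "I = ivl r x y - {x}"
    define D where "D = (\<Sum>z\<in>I. [:-1,1:] ^ (h x z) * G_poly P r z y)"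
    have xI: "x \<in> ivl r x y" by (rule left_in[OF xy])
    have zI: "(x,z) \<in> r" "(z,y) \<in> r" "z \<noteq> x" if "z \<in> I" for z
      using that unfolding I_def by (auto simp: ivl_iff)
    have F1: "Fp x y = G_poly P r x y + D"
      unfolding Fp_def D_def I_def
      using sum.remove[OF fin_ivl xI, of "\<lambda>z. [:-1,1:] ^ (h x z) * G_poly P r z y"] h_refl by simp
    have E: "G_poly P r x y = Fp x y + (\<Sum>z\<in>I. [:1,-1:] ^ (h x z) * Fp z y)"
      using exch[OF xy] sum.remove[OF fin_ivl xI, of "\<lambda>z. [:1,-1:] ^ (h x z) * Fp z y"] h_refl
      unfolding I_def by simp
    have RD: "Rv e D = (\<Sum>z\<in>I. [:1,-1:] ^ (h x z) * Fp z y)"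
      unfolding D_def Rv_sum
    proof (rule sum.cong[OF refl])
      fix z assume z: "z \<in> I"
      have ez: "e = h x z + h z y" unfolding e_def using h_add zI[OF z] by simp
      have lt: "h z y < n" using h_lt_left[OF zI(1,2,3)[OF z]] en unfolding e_def by simp
      have IH: "Fp z y = Rv (h z y) (G_poly P r z y)" using less.IH[OF lt zI(2)[OF z]] by simp
      show "Rv e ([:-1,1:] ^ (h x z) * G_poly P r z y) = [:1,-1:] ^ (h x z) * Fp z y"
        unfolding ez IH by (rule Rv_mult[OF G_deg'[OF zI(2)[OF z]]])
    qed
    have antis: "Rv e D = - D" using F1 E RD by (simp add: algebra_simps)
    have HD: "[:1,-1:] * Hsum (G_poly P r) r x y = - D"
    proof -
      have "[:1,-1:] * Hsum (G_poly P r) r x y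
          = (\<Sum>z\<in>I. - ([:-1,1:] * [:-1,1:] ^ (h x z - 1) * G_poly P r z y))"
        unfolding Hsum_def I_def sum_distrib_left
      proof (rule sum.cong[OF refl])
        fix z
        have lin: "[:1,-1::int:] = - [:-1,1:]" by simp
        show "[:1,-1:] * ([:-1,1:] ^ (h x z - 1) * G_poly P r z y) = - ([:-1,1:] * [:-1,1:] ^ (h x z - 1) * G_poly P r z y)"
          by (simp only: lin mult_minus_left mult.assoc)
      qed
      also have "\<dots> = (\<Sum>z\<in>I. - ([:-1,1:] ^ (h x z) * G_poly P r z y))"
      proof (rule sum.cong[OF refl])
        fix z assume z: "z \<in> I"
        have "1 \<le> h x z" using h_pos zI[OF z] by auto
        then have "[:-1,1::int:] * [:-1,1:] ^ (h x z - 1) = [:-1,1:] ^ (h x z)"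
          by (simp add: power_eq_if[of _ "h x z"])
        then show "- ([:-1,1:] * [:-1,1:] ^ (h x z - 1) * G_poly P r z y) = - ([:-1,1:] ^ (h x z) * G_poly P r z y)"
          by simp
      qed
      also have "\<dots> = - D" unfolding D_def by (simp add: sum_negf)
      finally show ?thesis .
    qed
    have Gd: "G_poly P r x y = tau_half e (- D)"
      using G_unfold[OF xy] e0 HD unfolding e_def by simp
    have cD: "coeff D i = - (if i \<le> e then coeff D (e - i) else 0)" for i
      using arg_cong[OF antis, of "\<lambda>p. coeff p i"] by (simp add: coeff_Rv)
    have cG: "coeff (G_poly P r x y) i = (if 2 * i < e then - coeff D i else 0)" for i
      unfolding Gd by (simp add: coeff_tau_half)
    have "Fp x y = Rv e (G_poly P r x y)"
    proof (rule poly_eqI)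
      fix j
      have L: "coeff (Fp x y) j = coeff (G_poly P r x y) j + coeff D j" using F1 by simp
      show "coeff (Fp x y) j = coeff (Rv e (G_poly P r x y)) j"
      proof (cases "j \<le> e")
        case False
        then show ?thesis using L cD[of j] cG[of j] by (simp add: coeff_Rv)
      next
        case True
        have R: "coeff (Rv e (G_poly P r x y)) j = (if 2 * (e - j) < e then - coeff D (e - j) else 0)"
          using True cG[of "e - j"] by (simp add: coeff_Rv)
        have dj: "coeff D j = - coeff D (e - j)" using cD[of j] True by simp
        consider "2 * j < e" | "2 * j = e" | "e < 2 * j" by linarith
        then show ?thesis
        proof cases
          case 1
          then have "\<not> 2 * (e - j) < e" by linarith
          then show ?thesis using L R cG[of j] 1 dj by simp
        next
          case 2
          then have "e - j = j" by linarith
          then have "coeff D j = 0" using dj by simp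
          then show ?thesis using L R cG[of j] 2 by simp
        next
          case 3
          then have "2 * (e - j) < e" using True by linarith
          then show ?thesis using L R cG[of j] 3 dj by simp
        qed
      qed
    qed
    then show ?thesis using en by simp
  qed
qed

lemma M: "(x,y) \<in> r \<Longrightarrow> Fp x y = Rv (h x y) (G_poly P r x y)"
  using M_aux by blast

lemma Ba: "(x,y) \<in> r \<Longrightarrow> h x y = n \<Longrightarrow> poly (B_poly P r x y) 1 = [:1,-1:] ^ n"
proof (induction n arbitrary: y rule: less_induct)
  case (less n y)
  note xy = less.prems(1)
  show ?case
  proof (cases "n = 0")
    case True
    then have "x = y" using h_zero_eq xy less.prems(2) by simp
    then show ?thesis using True B_refl xy r_sub by simp
  next
    case False
    have yI: "y \<in> ivl r x y" by (rule right_in[OF xy])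
    have zI: "(x,z) \<in> r" "(z,y) \<in> r" "z \<noteq> y" if "z \<in> ivl r x y - {y}" for z
      using that by (auto simp: ivl_iff)
    have "poly (B_poly P r x y) 1 = G_poly P r x y
        - (\<Sum>z\<in>ivl r x y - {y}. poly (B_poly P r x z) 1 * poly (homog (h x y - h x z) (G_poly P r z y)) 1)"
      using B_unfold[OF xy] False less.prems(2) by (simp add: poly_at_uv poly_sum)
    also have "(\<Sum>z\<in>ivl r x y - {y}. poly (B_poly P r x z) 1 * poly (homog (h x y - h x z) (G_poly P r z y)) 1)
        = (\<Sum>z\<in>ivl r x y - {y}. [:1,-1:] ^ (h x z) * Fp z y)"
    proof (rule sum.cong[OF refl])
      fix z assume z: "z \<in> ivl r x y - {y}"
      have lt: "h x z < n" using h_lt_right[OF zI[OF z]] less.prems(2) by simp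
      have ez: "h x y - h x z = h z y" using h_add[OF zI(1,2)[OF z]] by simp
      show "poly (B_poly P r x z) 1 * poly (homog (h x y - h x z) (G_poly P r z y)) 1 = [:1,-1:] ^ (h x z) * Fp z y"
        unfolding ez less.IH[OF lt zI(1)[OF z] refl] poly_homog[OF G_deg'[OF zI(2)[OF z]]]
          M[OF zI(2)[OF z]] by simp
    qed
    also have "G_poly P r x y = [:1,-1:] ^ (h x y) * Fp y y + (\<Sum>z\<in>ivl r x y - {y}. [:1,-1:] ^ (h x z) * Fp z y)"
      using exch[OF xy] sum.remove[OF fin_ivl yI, of "\<lambda>z. [:1,-1:] ^ (h x z) * Fp z y"] by simp
    finally show ?thesis using Fp_refl xy r_sub less.prems(2) by simp
  qed
qed

lemma Bb: "(x,y) \<in> r \<Longrightarrow> h x y = n \<Longrightarrow> 0 < n \<Longrightarrow> phi (B_poly P r x y) = 0"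
proof (induction n arbitrary: y rule: less_induct)
  case (less n y)
  note xy = less.prems(1)
  have xny: "x \<noteq> y" using less.prems h_refl by auto
  have xI: "x \<in> ivl r x y - {y}" using left_in[OF xy] xny by simp
  have zI: "(x,z) \<in> r" "(z,y) \<in> r" "z \<noteq> y" if "z \<in> ivl r x y - {y}" for z
    using that by (auto simp: ivl_iff)
  have fin: "finite (ivl r x y - {y})" using fin_ivl by simp
  have "phi (B_poly P r x y) = G_poly P r x y
      - (\<Sum>z\<in>ivl r x y - {y}. phi (B_poly P r x z) * G_poly P r z y)"
    using B_unfold[OF xy] less.prems by (simp add: phi_at_uv phi_sum phi_diff phi_mult phi_homog)
  also have "(\<Sum>z\<in>ivl r x y - {y}. phi (B_poly P r x z) * G_poly P r z y)
      = phi (B_poly P r x x) * G_poly P r x y + (\<Sum>z\<in>ivl r x y - {y} - {x}. phi (B_poly P r x z) * G_poly P r z y)"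
    by (rule sum.remove[OF fin xI])
  also have "(\<Sum>z\<in>ivl r x y - {y} - {x}. phi (B_poly P r x z) * G_poly P r z y) = 0"
  proof (rule sum.neutral, rule ballI)
    fix z assume z: "z \<in> ivl r x y - {y} - {x}"
    then have z': "z \<in> ivl r x y - {y}" "z \<noteq> x" by auto
    have lt: "h x z < n" using h_lt_right[OF zI[OF z'(1)]] less.prems(2) by simp
    have pos: "0 < h x z" using h_pos[OF zI(1)[OF z'(1)]] z'(2) by auto
    show "phi (B_poly P r x z) * G_poly P r z y = 0"
      using less.IH[OF lt zI(1)[OF z'(1)] refl pos] by simp
  qed
  finally show ?case using B_refl r_sub xy phi_one by simp
qed

lemma half_le: "2 * k < (n::nat) \<Longrightarrow> k \<le> (n - 1) div 2" by presburger

lemma Bdeg: "(x,y) \<in> r \<Longrightarrow> h x y = n \<Longrightarrow> 0 < n \<Longrightarrow> 2 * degree (B_poly P r x y) < n"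
proof (induction n arbitrary: y rule: less_induct)
  case (less n y)
  note xy = less.prems(1)
  have zI: "(x,z) \<in> r" "(z,y) \<in> r" "z \<noteq> y" if "z \<in> ivl r x y - {y}" for z
    using that by (auto simp: ivl_iff)
  have dG: "degree (at_uv (G_poly P r x y)) \<le> (n - 1) div 2"
    using degree_at_uv[of "G_poly P r x y"] G_deg[OF xy] less.prems half_le by fastforce
  have dS: "degree (\<Sum>z\<in>ivl r x y - {y}. B_poly P r x z * homog (h x y - h x z) (G_poly P r z y)) \<le> (n - 1) div 2"
  proof (rule degree_sum_le)
    show "finite (ivl r x y - {y})" using fin_ivl by simp
  next
    fix z assume z: "z \<in> ivl r x y - {y}"
    have hzy: "0 < h z y" using h_pos[OF zI(2,3)[OF z]] by simp
    have dGz: "2 * degree (G_poly P r z y) < h z y" by (rule G_deg[OF zI(2)[OF z] hzy])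
    have add: "h x z + h z y = n" using h_add[OF zI(1,2)[OF z]] less.prems(2) by simp
    have "degree (B_poly P r x z * homog (h x y - h x z) (G_poly P r z y))
        \<le> degree (B_poly P r x z) + degree (G_poly P r z y)"
      using degree_mult_le[of "B_poly P r x z" "homog (h x y - h x z) (G_poly P r z y)"] degree_homog[of "h x y - h x z" "G_poly P r z y"] by linarith
    moreover have "2 * (degree (B_poly P r x z) + degree (G_poly P r z y)) < n"
    proof (cases "z = x")
      case True
      then show ?thesis using B_refl r_sub xy dGz add h_refl by simp
    next
      case False
      have lt: "h x z < n" using h_lt_right[OF zI[OF z]] less.prems(2) by simp
      have pos: "0 < h x z" using h_pos[OF zI(1)[OF z]] False by auto
      have "2 * degree (B_poly P r x z) < h x z" by (rule less.IH[OF lt zI(1)[OF z] refl pos])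
      then have "2 * degree (B_poly P r x z) + 2 * degree (G_poly P r z y) < n" using dGz add by linarith
      then show ?thesis by (simp add: distrib_left)
    qed
    ultimately show "degree (B_poly P r x z * homog (h x y - h x z) (G_poly P r z y)) \<le> (n - 1) div 2"
      using half_le by fastforce
  qed
  have "B_poly P r x y = at_uv (G_poly P r x y) - (\<Sum>z\<in>ivl r x y - {y}. B_poly P r x z * homog (h x y - h x z) (G_poly P r z y))"
    using B_unfold[OF xy] less.prems by simp
  then have "degree (B_poly P r x y) \<le> max (degree (at_uv (G_poly P r x y)))
      (degree (\<Sum>z\<in>ivl r x y - {y}. B_poly P r x z * homog (h x y - h x z) (G_poly P r z y)))"
    using degree_diff_le_max by metis
  then have "degree (B_poly P r x y) \<le> (n - 1) div 2"
    using dG dS by simp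
  then show ?case using less.prems by linarith
qed

end

theorem proposition2p10:
  fixes P :: "'a set" and r :: "'a rel" and zero one :: 'a and d :: nat
  assumes "eulerian P r zero one d" and "d > 0"
  shows "poly (B_poly P r zero one) 1 = [:1, -1:] ^ d
         \<and> map_poly (\<lambda>c. poly c 1) (B_poly P r zero one) = 0
         \<and> 2 * degree (B_poly P r zero one) < d"
proof -
  have E: "finite P" "partial_order_on P r" "zero \<in> P" "one \<in> P"
    "\<forall>x\<in>P. (zero, x) \<in> r \<and> (x, one) \<in> r"
    "\<forall>C. maximal_chain P r C \<longrightarrow> card C = d + 1"
    "\<forall>x\<in>P. \<forall>y\<in>P. (x, y) \<in> r \<longrightarrow> mobius P r x y = (-1) ^ (rho r zero y - rho r zero x)"
    using assms(1) unfolding eulerian_def by blast+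
  interpret fpos P r using E(1,2) by unfold_locales
  interpret eul P r zero one d
    using E(3-7) by unfold_locales auto
  have 01: "(zero, one) \<in> r" using E(5) E(4) by blast
  have hd: "height r zero one = d" using triple[OF 01] h_refl by simp
  show ?thesis
    using Ba[OF 01 hd] Bb[OF 01 hd assms(2)] Bdeg[OF 01 hd assms(2)] unfolding phi_def by simp
qed

end
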